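(* Let $(\mathbb{P},\le,f)$ be a forcing property for $\mathcal{L}_A$. For all $p\in\mathbb{P}$ and $\varphi\in\mathcal{L}_A^s(C)$: (1) $F_p(\varphi)\in[0,1]$; (2) if $q\le p$ then $F_q(\varphi)\le F_p(\varphi)$; (3) $F_p(\varphi)+F_p(\neg\varphi)\ge1$.
   Context: $\mathcal{L}$ is a countable continuous signature; formulas of $\mathcal{L}_{\omega_1,\omega}$ are built from atomic formulas using $\neg$, $\tfrac12$, $\dotplus$, countable conjunctions $\bigwedge$ and $\inf_x$. $\mathcal{L}_A$ is a countable fragment, $C=\{c_i:i<\omega\}$ new constants, $\mathcal{L}_A(C)$ the smallest countable fragment of $\mathcal{L}_{\omega_1,\omega}(C)$ containing $\mathcal{L}_A$, $\mathcal{L}_A^s(C)$ its sentences, $\mathcal{L}_A^{as}(C)$ its atomic sentences, $\mathcal{T}(C)$ closed terms. A forcing property $(\mathbb{P},\le,f)$: poset with $f_p\colon\mathcal{L}_A^{as}(C)\to[0,1]$ such that (1) $p\le q\Rightarrow f_p\le f_q$; (2) for every $p$, $\varepsilon>0$, $\tau,\sigma\in\mathcal{T}(C)$, atomic $\varphi(x)$ there are $q\le p$, $c\in C$ with $f_q(d(\tau,c))<\varepsilon$, $f_q(d(\tau,\sigma))<f_p(d(\sigma,\tau))+\varepsilon$, and if $f_p(d(\tau,\sigma))<\delta_{\varphi,x}(\varepsilon)$ then $f_q(\varphi(\sigma))<f_p(\varphi(\tau))+\varepsilon$. $F_p$ on sentences: $F_p(\varphi)=f_p(\varphi)$ for atomic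 $\varphi$; $F_p(\neg\varphi)=1-\inf_{q\le p}F_q(\varphi)$; $F_p(\tfrac12\varphi)=\tfrac12F_p(\varphi)$; $F_p(\varphi\dotplus\psi)=\min(F_p(\varphi)+F_p(\psi),1)$; $F_p(\bigwedge\Phi)=\inf_{\varphi\in\Phi}F_p(\varphi)$; $F_p(\inf_x\varphi)=\inf_{c\in C}F_p(\varphi(c))$. *)

theory Defs
  imports "HOL-Analysis.Analysis" "HOL-Library.Countable_Set_Type"
begin

text \<open>Terms over function symbols 'f (constants of L are 0-ary function symbols);
  variables are indexed by nat; CC i is the new constant c_i of C.\<close>
datatype 'f trm = Var nat | CC nat | Fn 'f "'f trm list"

datatype ('f,'r) atm = Dist "'f trm" "'f trm" | Rel 'r "'f trm list"

datatype ('f,'r) fm =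
    Atom "('f,'r) atm"
  | Neg "('f,'r) fm"
  | Half "('f,'r) fm"
  | Plus "('f,'r) fm" "('f,'r) fm"
  | Conj "('f,'r) fm cset"
  | Inf nat "('f,'r) fm"

primrec tfv :: "'f trm \<Rightarrow> nat set" where
  "tfv (Var x) = {x}"
| "tfv (CC i) = {}"
| "tfv (Fn g ts) = \<Union> (set (map tfv ts))"

primrec tccs :: "'f trm \<Rightarrow> nat set" where
  "tccs (Var x) = {}"
| "tccs (CC i) = {i}"
| "tccs (Fn g ts) = \<Union> (set (map tccs ts))"

primrec wf_trm :: "('f \<Rightarrow> nat) \<Rightarrow> 'f trm \<Rightarrow> bool" where
  "wf_trm ar (Var x) = True"
| "wf_trm ar (CC i) = True"
| "wf_trm ar (Fn g ts) = (length ts = ar g \<and> list_all (wf_trm ar) ts)"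

primrec tsubst :: "(nat \<Rightarrow> 'f trm) \<Rightarrow> 'f trm \<Rightarrow> 'f trm" where
  "tsubst \<sigma> (Var x) = \<sigma> x"
| "tsubst \<sigma> (CC i) = CC i"
| "tsubst \<sigma> (Fn g ts) = Fn g (map (tsubst \<sigma>) ts)"

definition closed_trm :: "('f \<Rightarrow> nat) \<Rightarrow> 'f trm \<Rightarrow> bool" where
  "closed_trm ar t \<longleftrightarrow> wf_trm ar t \<and> tfv t = {}"

fun afv :: "('f,'r) atm \<Rightarrow> nat set" where
  "afv (Dist t s) = tfv t \<union> tfv s"
| "afv (Rel r ts) = \<Union> (set (map tfv ts))"

fun accs :: "('f,'r) atm \<Rightarrow> nat set" where
  "accs (Dist t s) = tccs t \<union> tccs s"
| "accs (Rel r ts) = \<Union> (set (map tccs ts))"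

fun wf_atm :: "('f \<Rightarrow> nat) \<Rightarrow> ('r \<Rightarrow> nat) \<Rightarrow> ('f,'r) atm \<Rightarrow> bool" where
  "wf_atm ar rar (Dist t s) = (wf_trm ar t \<and> wf_trm ar s)"
| "wf_atm ar rar (Rel r ts) = (length ts = rar r \<and> list_all (wf_trm ar) ts)"

fun asubst :: "(nat \<Rightarrow> 'f trm) \<Rightarrow> ('f,'r) atm \<Rightarrow> ('f,'r) atm" where
  "asubst \<sigma> (Dist t s) = Dist (tsubst \<sigma> t) (tsubst \<sigma> s)"
| "asubst \<sigma> (Rel r ts) = Rel r (map (tsubst \<sigma>) ts)"

definition atomic_sentence :: "('f \<Rightarrow> nat) \<Rightarrow> ('r \<Rightarrow> nat) \<Rightarrow> ('f,'r) atm \<Rightarrow> bool" where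
  "atomic_sentence ar rar a \<longleftrightarrow> wf_atm ar rar a \<and> afv a = {}"

definition ainst :: "nat \<Rightarrow> 'f trm \<Rightarrow> ('f,'r) atm \<Rightarrow> ('f,'r) atm" where
  "ainst x t a = asubst (Var(x := t)) a"

primrec fv :: "('f,'r) fm \<Rightarrow> nat set" where
  "fv (Atom a) = afv a"
| "fv (Neg \<phi>) = fv \<phi>"
| "fv (Half \<phi>) = fv \<phi>"
| "fv (Plus \<phi> \<psi>) = fv \<phi> \<union> fv \<psi>"
| "fv (Conj \<Phi>) = \<Union> (rcset (cimage fv \<Phi>))"
| "fv (Inf x \<phi>) = fv \<phi> - {x}"

primrec ccs :: "('f,'r) fm \<Rightarrow> nat set" where
  "ccs (Atom a) = accs a"
| "ccs (Neg \<phi>) = ccs \<phi>"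
| "ccs (Half \<phi>) = ccs \<phi>"
| "ccs (Plus \<phi> \<psi>) = ccs \<phi> \<union> ccs \<psi>"
| "ccs (Conj \<Phi>) = \<Union> (rcset (cimage ccs \<Phi>))"
| "ccs (Inf x \<phi>) = ccs \<phi>"

primrec subst :: "nat \<Rightarrow> 'f trm \<Rightarrow> ('f,'r) fm \<Rightarrow> ('f,'r) fm" where
  "subst x t (Atom a) = Atom (ainst x t a)"
| "subst x t (Neg \<phi>) = Neg (subst x t \<phi>)"
| "subst x t (Half \<phi>) = Half (subst x t \<phi>)"
| "subst x t (Plus \<phi> \<psi>) = Plus (subst x t \<phi>) (subst x t \<psi>)"
| "subst x t (Conj \<Phi>) = Conj (cimage (subst x t) \<Phi>)"
| "subst x t (Inf y \<phi>) = (if y = x then Inf y \<phi> else Inf y (subst x t \<phi>))"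

inductive wff :: "('f \<Rightarrow> nat) \<Rightarrow> ('r \<Rightarrow> nat) \<Rightarrow> ('f,'r) fm \<Rightarrow> bool" for ar rar where
  "wf_atm ar rar a \<Longrightarrow> wff ar rar (Atom a)"
| "wff ar rar \<phi> \<Longrightarrow> wff ar rar (Neg \<phi>)"
| "wff ar rar \<phi> \<Longrightarrow> wff ar rar (Half \<phi>)"
| "wff ar rar \<phi> \<Longrightarrow> wff ar rar \<psi> \<Longrightarrow> wff ar rar (Plus \<phi> \<psi>)"
| "rcset \<Phi> \<noteq> {} \<Longrightarrow> (\<forall>\<psi>\<in>rcset \<Phi>. wff ar rar \<psi>) \<Longrightarrow> finite (fv (Conj \<Phi>))
     \<Longrightarrow> wff ar rar (Conj \<Phi>)"
| "wff ar rar \<phi> \<Longrightarrow> wff ar rar (Inf x \<phi>)"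

definition sentence :: "('f \<Rightarrow> nat) \<Rightarrow> ('r \<Rightarrow> nat) \<Rightarrow> ('f,'r) fm \<Rightarrow> bool" where
  "sentence ar rar \<phi> \<longleftrightarrow> wff ar rar \<phi> \<and> fv \<phi> = {}"

text \<open>Fragments. With wC = False: fragment of L_{omega1,omega} (no constants from C);
  with wC = True: fragment of L_{omega1,omega}(C).\<close>
definition fragment :: "('f \<Rightarrow> nat) \<Rightarrow> ('r \<Rightarrow> nat) \<Rightarrow> bool \<Rightarrow> ('f,'r) fm set \<Rightarrow> bool" where
  "fragment ar rar wC Fr \<longleftrightarrow>
     (\<forall>\<phi>\<in>Fr. wff ar rar \<phi> \<and> (wC \<or> ccs \<phi> = {})) \<and>
     (\<forall>a. wf_atm ar rar a \<and> (wC \<or> accs a = {}) \<longrightarrow> Atom a \<in> Fr) \<and>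
     (\<forall>\<phi>. Neg \<phi> \<in> Fr \<longrightarrow> \<phi> \<in> Fr) \<and>
     (\<forall>\<phi>. Half \<phi> \<in> Fr \<longrightarrow> \<phi> \<in> Fr) \<and>
     (\<forall>\<phi> \<psi>. Plus \<phi> \<psi> \<in> Fr \<longrightarrow> \<phi> \<in> Fr \<and> \<psi> \<in> Fr) \<and>
     (\<forall>\<Phi>. Conj \<Phi> \<in> Fr \<longrightarrow> rcset \<Phi> \<subseteq> Fr) \<and>
     (\<forall>x \<phi>. Inf x \<phi> \<in> Fr \<longrightarrow> \<phi> \<in> Fr) \<and>
     (\<forall>\<phi>\<in>Fr. Neg \<phi> \<in> Fr \<and> Half \<phi> \<in> Fr \<and> (\<forall>x. Inf x \<phi> \<in> Fr)) \<and>
     (\<forall>\<phi>\<in>Fr. \<forall>\<psi>\<in>Fr. Plus \<phi> \<psi> \<in> Fr \<and> Conj (cinsert \<phi> (cinsert \<psi> cempty)) \<in> Fr) \<and>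
     (\<forall>\<phi>\<in>Fr. \<forall>x t. closed_trm ar t \<and> (wC \<or> tccs t = {}) \<longrightarrow> subst x t \<phi> \<in> Fr)"

definition LAC :: "('f \<Rightarrow> nat) \<Rightarrow> ('r \<Rightarrow> nat) \<Rightarrow> ('f,'r) fm set \<Rightarrow> ('f,'r) fm set" where
  "LAC ar rar LA = \<Inter> {Fr. fragment ar rar True Fr \<and> countable Fr \<and> LA \<subseteq> Fr}"

text \<open>delta is the modulus of uniform continuity delta_{phi,x} of the atomic formula phi in x,
  given with the continuous signature.\<close>
definition forcing_property ::
  "('f \<Rightarrow> nat) \<Rightarrow> ('r \<Rightarrow> nat) \<Rightarrow> (('f,'r) atm \<Rightarrow> nat \<Rightarrow> real \<Rightarrow> real)
   \<Rightarrow> 'p set \<Rightarrow> ('p \<Rightarrow> 'p \<Rightarrow> bool) \<Rightarrow> ('p \<Rightarrow> ('f,'r) atm \<Rightarrow> real) \<Rightarrow> bool" where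
  "forcing_property ar rar \<delta> P le f \<longleftrightarrow>
     (\<forall>p\<in>P. le p p) \<and>
     (\<forall>p\<in>P. \<forall>q\<in>P. le p q \<and> le q p \<longrightarrow> p = q) \<and>
     (\<forall>p\<in>P. \<forall>q\<in>P. \<forall>r\<in>P. le p q \<and> le q r \<longrightarrow> le p r) \<and>
     (\<forall>p\<in>P. \<forall>a. atomic_sentence ar rar a \<longrightarrow> f p a \<in> {0..1}) \<and>
     (\<forall>p\<in>P. \<forall>q\<in>P. le p q \<longrightarrow> (\<forall>a. atomic_sentence ar rar a \<longrightarrow> f p a \<le> f q a)) \<and>
     (\<forall>p\<in>P. \<forall>\<epsilon>>0. \<forall>\<tau> \<sigma> \<phi> x.
        closed_trm ar \<tau> \<and> closed_trm ar \<sigma> \<and> wf_atm ar rar \<phi> \<and> afv \<phi> \<subseteq> {x} \<longrightarrow>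
        (\<exists>q\<in>P. le q p \<and> (\<exists>c. f q (Dist \<tau> (CC c)) < \<epsilon> \<and>
            f q (Dist \<tau> \<sigma>) < f p (Dist \<sigma> \<tau>) + \<epsilon> \<and>
            (f p (Dist \<tau> \<sigma>) < \<delta> \<phi> x \<epsilon> \<longrightarrow>
               f q (ainst x \<sigma> \<phi>) < f p (ainst x \<tau> \<phi>) + \<epsilon>))))"

text \<open>The forcing values. FF P le f phi rho p is F_p of phi[rho], where rho assigns
  constants of C to the variables bound so far; the inf_x clause ranges over c in C.\<close>
primrec FF :: "'p set \<Rightarrow> ('p \<Rightarrow> 'p \<Rightarrow> bool) \<Rightarrow> ('p \<Rightarrow> ('f,'r) atm \<Rightarrow> real)
               \<Rightarrow> ('f,'r) fm \<Rightarrow> (nat \<Rightarrow> 'f trm) \<Rightarrow> 'p \<Rightarrow> real" where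
  "FF P le f (Atom a) \<rho> p = f p (asubst \<rho> a)"
| "FF P le f (Neg \<phi>) \<rho> p = 1 - (INF q\<in>{q\<in>P. le q p}. FF P le f \<phi> \<rho> q)"
| "FF P le f (Half \<phi>) \<rho> p = FF P le f \<phi> \<rho> p / 2"
| "FF P le f (Plus \<phi> \<psi>) \<rho> p = min (FF P le f \<phi> \<rho> p + FF P le f \<psi> \<rho> p) 1"
| "FF P le f (Conj \<Phi>) \<rho> p = (INF g\<in>rcset (cimage (FF P le f) \<Phi>). g \<rho> p)"
| "FF P le f (Inf x \<phi>) \<rho> p = (INF c\<in>UNIV. FF P le f \<phi> (\<rho>(x := CC c)) p)"

definition Fp :: "'p set \<Rightarrow> ('p \<Rightarrow> 'p \<Rightarrow> bool) \<Rightarrow> ('p \<Rightarrow> ('f,'r) atm \<Rightarrow> real)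
                  \<Rightarrow> 'p \<Rightarrow> ('f,'r) fm \<Rightarrow> real" where
  "Fp P le f p \<phi> = FF P le f \<phi> Var p"

end

theory Submission
  imports Defs
begin

lemma tsubst_closed:
  "wf_trm ar t \<Longrightarrow> (\<forall>x\<in>tfv t. \<exists>c. \<rho> x = CC c) \<Longrightarrow>
   wf_trm ar (tsubst \<rho> t) \<and> tfv (tsubst \<rho> t) = {}"
proof (induction t)
  case (Var x) then show ?case by auto
next
  case (CC i) then show ?case by simp
next
  case (Fn g ts)
  have "\<forall>t\<in>set ts. wf_trm ar (tsubst \<rho> t) \<and> tfv (tsubst \<rho> t) = {}"
  proof
    fix t assume t: "t \<in> set ts"
    have "wf_trm ar t" using Fn.prems(1) t by (simp add: list_all_iff)
    moreover have "\<forall>x\<in>tfv t. \<exists>c. \<rho> x = CC c" using Fn.prems(2) t by simp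
    ultimately show "wf_trm ar (tsubst \<rho> t) \<and> tfv (tsubst \<rho> t) = {}" using Fn.IH t by blast
  qed
  then show ?case using Fn.prems(1) by (simp add: list_all_iff)
qed

lemma asubst_sentence:
  assumes "wf_atm ar rar a" "\<forall>x\<in>afv a. \<exists>c. \<rho> x = CC c"
  shows "atomic_sentence ar rar (asubst \<rho> a)"
proof (cases a)
  case (Dist t s)
  then show ?thesis using assms tsubst_closed[of ar t \<rho>] tsubst_closed[of ar s \<rho>]
    by (simp add: atomic_sentence_def)
next
  case (Rel r ts)
  have "\<forall>t\<in>set ts. wf_trm ar (tsubst \<rho> t) \<and> tfv (tsubst \<rho> t) = {}"
    using assms Rel tsubst_closed[of ar _ \<rho>] by (simp add: list_all_iff)
  then show ?thesis using assms Rel by (simp add: atomic_sentence_def list_all_iff)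
qed

lemma fp_facts:
  assumes fp: "forcing_property ar rar \<delta> P le f"
  shows "(\<forall>p\<in>P. le p p) \<and> (\<forall>p\<in>P. \<forall>q\<in>P. \<forall>r\<in>P. le p q \<and> le q r \<longrightarrow> le p r) \<and>
     (\<forall>p\<in>P. \<forall>a. atomic_sentence ar rar a \<longrightarrow> f p a \<in> {0..1}) \<and>
     (\<forall>p\<in>P. \<forall>q\<in>P. le p q \<longrightarrow> (\<forall>a. atomic_sentence ar rar a \<longrightarrow> f p a \<le> f q a))"
proof -
  note F = fp[unfolded forcing_property_def]
  show ?thesis
    using conjunct1[OF F] conjunct1[OF conjunct2[OF conjunct2[OF F]]]
      conjunct1[OF conjunct2[OF conjunct2[OF conjunct2[OF F]]]]
      conjunct1[OF conjunct2[OF conjunct2[OF conjunct2[OF conjunct2[OF F]]]]]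
    by (intro conjI)
qed

lemma FF_main:
  assumes fp: "forcing_property ar rar \<delta> P le f"
  shows "wff ar rar \<phi> \<Longrightarrow> (\<forall>x\<in>fv \<phi>. \<exists>c. \<rho> x = CC c) \<Longrightarrow>
     (\<forall>p\<in>P. FF P le f \<phi> \<rho> p \<in> {0..1} \<and>
        (\<forall>q\<in>P. le q p \<longrightarrow> FF P le f \<phi> \<rho> q \<le> FF P le f \<phi> \<rho> p))"
proof -
  have refl: "\<And>p. p \<in> P \<Longrightarrow> le p p" and
    trans: "\<And>p q r. p \<in> P \<Longrightarrow> q \<in> P \<Longrightarrow> r \<in> P \<Longrightarrow> le p q \<Longrightarrow> le q r \<Longrightarrow> le p r" and
    at01: "\<And>p a. p \<in> P \<Longrightarrow> atomic_sentence ar rar a \<Longrightarrow> f p a \<in> {0..1}" and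
    atmono: "\<And>p q a. p \<in> P \<Longrightarrow> q \<in> P \<Longrightarrow> le p q \<Longrightarrow> atomic_sentence ar rar a \<Longrightarrow> f p a \<le> f q a"
    using fp_facts[OF fp] by blast+
  show "wff ar rar \<phi> \<Longrightarrow> (\<forall>x\<in>fv \<phi>. \<exists>c. \<rho> x = CC c) \<Longrightarrow>
     (\<forall>p\<in>P. FF P le f \<phi> \<rho> p \<in> {0..1} \<and>
        (\<forall>q\<in>P. le q p \<longrightarrow> FF P le f \<phi> \<rho> q \<le> FF P le f \<phi> \<rho> p))"
proof (induction \<phi> arbitrary: \<rho> rule: wff.induct)
  case (1 a)
  then have "atomic_sentence ar rar (asubst \<rho> a)" by (simp add: asubst_sentence)
  then show ?case using at01 atmono by simp
next
  case (2 \<phi>)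
  then have IH: "\<forall>p\<in>P. FF P le f \<phi> \<rho> p \<in> {0..1} \<and>
        (\<forall>q\<in>P. le q p \<longrightarrow> FF P le f \<phi> \<rho> q \<le> FF P le f \<phi> \<rho> p)" by simp
  have bdd: "bdd_below ((\<lambda>q. FF P le f \<phi> \<rho> q) ` {q\<in>P. le q p})" for p
    using IH by (auto intro!: bdd_belowI[where m=0])
  show ?case
  proof (intro ballI conjI impI)
    fix p assume p: "p \<in> P"
    have ne: "{q\<in>P. le q p} \<noteq> {}" using p refl by auto
    have "(INF q\<in>{q\<in>P. le q p}. FF P le f \<phi> \<rho> q) \<ge> 0"
      by (rule cINF_greatest[OF ne]) (use IH in auto)
    moreover have "(INF q\<in>{q\<in>P. le q p}. FF P le f \<phi> \<rho> q) \<le> 1"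
      using cINF_lower[OF bdd, of p p] p refl IH by force
    ultimately show "FF P le f (Neg \<phi>) \<rho> p \<in> {0..1}" by simp
    fix q assume q: "q \<in> P" "le q p"
    have neq: "{r\<in>P. le r q} \<noteq> {}" using q refl by auto
    have "(INF r\<in>{r\<in>P. le r p}. FF P le f \<phi> \<rho> r) \<le> (INF r\<in>{r\<in>P. le r q}. FF P le f \<phi> \<rho> r)"
    proof (rule cINF_superset_mono[OF neq bdd])
      show "{r\<in>P. le r q} \<subseteq> {r\<in>P. le r p}"
      proof
        fix r assume "r \<in> {r\<in>P. le r q}"
        then have "r \<in> P" "le r q" by auto
        then show "r \<in> {r\<in>P. le r p}" using trans[of r q p] q p by simp
      qed
    qed simp
    then show "FF P le f (Neg \<phi>) \<rho> q \<le> FF P le f (Neg \<phi>) \<rho> p" by simp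
  qed
next
  case (3 \<phi>)
  then have "\<forall>p\<in>P. FF P le f \<phi> \<rho> p \<in> {0..1} \<and>
        (\<forall>q\<in>P. le q p \<longrightarrow> FF P le f \<phi> \<rho> q \<le> FF P le f \<phi> \<rho> p)" by simp
  then show ?case by force
next
  case (4 \<phi> \<psi>)
  then have A: "\<forall>p\<in>P. FF P le f \<phi> \<rho> p \<in> {0..1} \<and>
        (\<forall>q\<in>P. le q p \<longrightarrow> FF P le f \<phi> \<rho> q \<le> FF P le f \<phi> \<rho> p)"
    and B: "\<forall>p\<in>P. FF P le f \<psi> \<rho> p \<in> {0..1} \<and>
        (\<forall>q\<in>P. le q p \<longrightarrow> FF P le f \<psi> \<rho> q \<le> FF P le f \<psi> \<rho> p)" by simp_all
  show ?case
  proof (intro ballI conjI impI)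
    fix p assume p: "p \<in> P"
    show "FF P le f (Plus \<phi> \<psi>) \<rho> p \<in> {0..1}" using A B p by auto
    fix q assume q: "q \<in> P" "le q p"
    have "FF P le f \<phi> \<rho> q + FF P le f \<psi> \<rho> q \<le> FF P le f \<phi> \<rho> p + FF P le f \<psi> \<rho> p"
      using A B p q by (meson add_mono)
    then show "FF P le f (Plus \<phi> \<psi>) \<rho> q \<le> FF P le f (Plus \<phi> \<psi>) \<rho> p" by simp
  qed
next
  case (5 \<Phi>)
  have IH: "\<forall>\<psi>\<in>rcset \<Phi>. \<forall>p\<in>P. FF P le f \<psi> \<rho> p \<in> {0..1} \<and>
        (\<forall>q\<in>P. le q p \<longrightarrow> FF P le f \<psi> \<rho> q \<le> FF P le f \<psi> \<rho> p)"
  proof (rule ballI)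
    fix \<psi> assume \<psi>: "\<psi> \<in> rcset \<Phi>"
    have fvsub: "fv \<psi> \<subseteq> fv (Conj \<Phi>)" using \<psi> by (auto simp: cimage.rep_eq)
    have env: "\<forall>x\<in>fv \<psi>. \<exists>c. \<rho> x = CC c" using fvsub "5.prems" by blast
    have "wff ar rar \<psi> \<and> (\<forall>\<rho>. (\<forall>x\<in>fv \<psi>. \<exists>c. \<rho> x = CC c) \<longrightarrow> (\<forall>p\<in>P. FF P le f \<psi> \<rho> p \<in> {0..1} \<and>
        (\<forall>q\<in>P. le q p \<longrightarrow> FF P le f \<psi> \<rho> q \<le> FF P le f \<psi> \<rho> p)))"
      using "5.IH" \<psi> by blast
    then show "\<forall>p\<in>P. FF P le f \<psi> \<rho> p \<in> {0..1} \<and>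
        (\<forall>q\<in>P. le q p \<longrightarrow> FF P le f \<psi> \<rho> q \<le> FF P le f \<psi> \<rho> p)" using env by blast
  qed
  have eq: "FF P le f (Conj \<Phi>) \<rho> p = (INF \<psi>\<in>rcset \<Phi>. FF P le f \<psi> \<rho> p)" for p
    by (simp add: cimage.rep_eq image_image)
  have bdd: "bdd_below ((\<lambda>\<psi>. FF P le f \<psi> \<rho> p) ` rcset \<Phi>)" if "p \<in> P" for p
    using IH that by (auto intro!: bdd_belowI[where m=0])
  show ?case
  proof (intro ballI conjI impI)
    fix p assume p: "p \<in> P"
    obtain \<psi> where \<psi>: "\<psi> \<in> rcset \<Phi>" using 5 by auto
    have "(INF \<psi>\<in>rcset \<Phi>. FF P le f \<psi> \<rho> p) \<ge> 0"
      by (rule cINF_greatest[OF 5(1)]) (use IH p in auto)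
    moreover have "(INF \<psi>\<in>rcset \<Phi>. FF P le f \<psi> \<rho> p) \<le> 1"
      using cINF_lower[OF bdd[OF p] \<psi>] IH \<psi> p by force
    ultimately show "FF P le f (Conj \<Phi>) \<rho> p \<in> {0..1}" unfolding eq by simp
    fix q assume q: "q \<in> P" "le q p"
    have "(INF \<psi>\<in>rcset \<Phi>. FF P le f \<psi> \<rho> q) \<le> (INF \<psi>\<in>rcset \<Phi>. FF P le f \<psi> \<rho> p)"
      apply (rule cINF_superset_mono[OF 5(1) bdd[OF q(1)]])
      using IH q p by auto
    then show "FF P le f (Conj \<Phi>) \<rho> q \<le> FF P le f (Conj \<Phi>) \<rho> p" unfolding eq .
  qed
next
  case (6 \<phi> x)
  have IH: "\<forall>c. \<forall>p\<in>P. FF P le f \<phi> (\<rho>(x := CC c)) p \<in> {0..1} \<and>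
        (\<forall>q\<in>P. le q p \<longrightarrow> FF P le f \<phi> (\<rho>(x := CC c)) q \<le> FF P le f \<phi> (\<rho>(x := CC c)) p)"
  proof
    fix c show "\<forall>p\<in>P. FF P le f \<phi> (\<rho>(x := CC c)) p \<in> {0..1} \<and>
        (\<forall>q\<in>P. le q p \<longrightarrow> FF P le f \<phi> (\<rho>(x := CC c)) q \<le> FF P le f \<phi> (\<rho>(x := CC c)) p)"
      using 6 by (intro "6.IH") auto
  qed
  have bdd: "bdd_below ((\<lambda>c. FF P le f \<phi> (\<rho>(x := CC c)) p) ` UNIV)" if "p \<in> P" for p
    using IH that by (auto intro!: bdd_belowI[where m=0])
  show ?case
  proof (intro ballI conjI impI)
    fix p assume p: "p \<in> P"
    have "(INF c\<in>UNIV. FF P le f \<phi> (\<rho>(x := CC c)) p) \<ge> 0"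
      by (rule cINF_greatest) (use IH p in auto)
    moreover have "(INF c\<in>UNIV. FF P le f \<phi> (\<rho>(x := CC c)) p) \<le> 1"
    proof -
      have "(INF c\<in>UNIV. FF P le f \<phi> (\<rho>(x := CC c)) p) \<le> FF P le f \<phi> (\<rho>(x := CC 0)) p"
        using cINF_lower[OF bdd[OF p], of 0] by simp
      moreover have "FF P le f \<phi> (\<rho>(x := CC 0)) p \<le> 1" using IH p by simp
      ultimately show ?thesis by linarith
    qed
    ultimately show "FF P le f (Inf x \<phi>) \<rho> p \<in> {0..1}" by simp
    fix q assume q: "q \<in> P" "le q p"
    have "(INF c\<in>UNIV. FF P le f \<phi> (\<rho>(x := CC c)) q) \<le> (INF c\<in>UNIV. FF P le f \<phi> (\<rho>(x := CC c)) p)"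
      apply (rule cINF_superset_mono[OF _ bdd[OF q(1)]])
      using IH q p by auto
    then show "FF P le f (Inf x \<phi>) \<rho> q \<le> FF P le f (Inf x \<phi>) \<rho> p" by simp
  qed
qed
qed

theorem lemma2p5:
  fixes ar :: "'f::countable \<Rightarrow> nat" and rar :: "'r::countable \<Rightarrow> nat"
    and \<delta> :: "('f,'r) atm \<Rightarrow> nat \<Rightarrow> real \<Rightarrow> real"
    and LA :: "('f,'r) fm set"
    and P :: "'p set" and le :: "'p \<Rightarrow> 'p \<Rightarrow> bool" and f :: "'p \<Rightarrow> ('f,'r) atm \<Rightarrow> real"
  assumes "fragment ar rar False LA" and "countable LA"
    and "forcing_property ar rar \<delta> P le f"
    and "p \<in> P" and "\<phi> \<in> LAC ar rar LA" and "sentence ar rar \<phi>"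
  shows "Fp P le f p \<phi> \<in> {0..1} \<and>
         (\<forall>q\<in>P. le q p \<longrightarrow> Fp P le f q \<phi> \<le> Fp P le f p \<phi>) \<and>
         Fp P le f p \<phi> + Fp P le f p (Neg \<phi>) \<ge> 1"
proof -
  have M: "\<forall>p\<in>P. FF P le f \<phi> Var p \<in> {0..1} \<and>
        (\<forall>q\<in>P. le q p \<longrightarrow> FF P le f \<phi> Var q \<le> FF P le f \<phi> Var p)"
    using FF_main[OF assms(3)] assms(6) unfolding sentence_def by blast
  have bdd: "bdd_below ((\<lambda>q. FF P le f \<phi> Var q) ` {q\<in>P. le q p})"
    using M by (auto intro!: bdd_belowI[where m=0])
  have "le p p" using assms(4) conjunct1[OF fp_facts[OF assms(3)]] by blast
  then have "(INF q\<in>{q\<in>P. le q p}. FF P le f \<phi> Var q) \<le> FF P le f \<phi> Var p"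
    using cINF_lower[OF bdd, of p] assms(4) by blast
  then show ?thesis using M assms(4) unfolding Fp_def by auto
qed

end
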